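(* Let $p$ be a prime and let $G$ be a finite group with $G=PN$, where $1<P\in\mathrm{Syl}_p(G)$, $N\trianglelefteq G$, $\gcd(|P|,|N|)=1$ and $C_N(P)=1$. Then $G$ has a redundant Sylow $p$-subgroup if and only if $C_N(x)>1$ for every $p$-element $x\in G$.
   Context: For a finite group $G$ and a prime $p$, $G_p$ denotes the set of $p$-elements of $G$ and $\mathrm{Syl}_p(G)$ the set of Sylow $p$-subgroups of $G$. $G$ is said to have a redundant Sylow $p$-subgroup if $G_p$ is contained in the union of the members of some proper subset of $\mathrm{Syl}_p(G)$. *)

theory Defs
  imports "HOL-Algebra.Algebra" "HOL-Computational_Algebra.Primes"
begin

definition p_elements :: "('a, 'b) monoid_scheme \<Rightarrow> nat \<Rightarrow> 'a set" where
  "p_elements G p = {x \<in> carrier G. \<exists>n::nat. group.ord G x = p ^ n}"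

definition Sylow_subgroups :: "('a, 'b) monoid_scheme \<Rightarrow> nat \<Rightarrow> 'a set set" where
  "Sylow_subgroups G p = {P. subgroup P G \<and> card P = p ^ multiplicity p (order G)}"

definition has_redundant_Sylow :: "('a, 'b) monoid_scheme \<Rightarrow> nat \<Rightarrow> bool" where
  "has_redundant_Sylow G p \<longleftrightarrow>
     (\<exists>S. S \<subset> Sylow_subgroups G p \<and> p_elements G p \<subseteq> \<Union> S)"

definition centralizer_in :: "('a, 'b) monoid_scheme \<Rightarrow> 'a set \<Rightarrow> 'a set \<Rightarrow> 'a set" where
  "centralizer_in G M A = {y \<in> M. \<forall>x\<in>A. x \<otimes>\<^bsub>G\<^esub> y = y \<otimes>\<^bsub>G\<^esub> x}"

end

theory Submission
  imports Defs
begin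

definition rmul_act :: "('a, 'b) monoid_scheme \<Rightarrow> 'a \<Rightarrow> 'a set \<Rightarrow> 'a set" where
  "rmul_act G g = restrict (\<lambda>A. r_coset G A (m_inv G g)) {Y. Y \<subseteq> carrier G}"

lemma (in group) rmul_act_bij:
  assumes g: "g \<in> carrier G"
  shows "rmul_act G g \<in> Bij {S. S \<subseteq> carrier G}"
proof -
  let ?E = "{S. S \<subseteq> carrier G}"
  have "bij_betw (rmul_act G g) ?E ?E"
  proof (rule bij_betw_byWitness[where f' = "\<lambda>S. S #> g"])
    show "\<forall>a\<in>?E. rmul_act G g a #> g = a"
      using g by (simp add: rmul_act_def coset_mult_assoc)
    show "\<forall>a\<in>?E. rmul_act G g (a #> g) = a"
      using g by (simp add: rmul_act_def coset_mult_assoc r_coset_subset_G)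
    show "rmul_act G g ` ?E \<subseteq> ?E"
      using g r_coset_subset_G[of _ "inv g"] by (auto simp add: rmul_act_def)
    show "(\<lambda>S. S #> g) ` ?E \<subseteq> ?E"
      using g r_coset_subset_G[of _ g] by auto
  qed
  moreover have "rmul_act G g \<in> extensional ?E" by (simp add: rmul_act_def)
  ultimately show ?thesis by (simp add: Bij_def)
qed

lemma (in group) rmul_act_action:
  "group_action G {S. S \<subseteq> carrier G} (rmul_act G)"
proof -
  let ?E = "{S. S \<subseteq> carrier G}"
  have "rmul_act G \<in> hom G (BijGroup ?E)"
  proof (rule homI)
    fix x assume "x \<in> carrier G"
    then show "rmul_act G x \<in> carrier (BijGroup ?E)"
      using rmul_act_bij by (simp add: BijGroup_def)
  next
    fix x y assume x: "x \<in> carrier G" and y: "y \<in> carrier G"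
    have "rmul_act G (x \<otimes> y) = compose ?E (rmul_act G x) (rmul_act G y)"
    proof (rule ext)
      fix S show "rmul_act G (x \<otimes> y) S = compose ?E (rmul_act G x) (rmul_act G y) S"
        using x y by (auto simp add: rmul_act_def compose_def coset_mult_assoc
            inv_mult_group r_coset_subset_G)
    qed
    then show "rmul_act G (x \<otimes> y) = rmul_act G x \<otimes>\<^bsub>BijGroup ?E\<^esub> rmul_act G y"
      using rmul_act_bij x y by (simp add: BijGroup_def)
  qed
  then show ?thesis
    unfolding group_action_def group_hom_def
    by (simp add: group_BijGroup group_hom_axioms.intro is_group)
qed

definition conjset :: "('a, 'b) monoid_scheme \<Rightarrow> 'a \<Rightarrow> 'a set \<Rightarrow> 'a set" where
  "conjset G g S = (\<lambda>a. g \<otimes>\<^bsub>G\<^esub> a \<otimes>\<^bsub>G\<^esub> inv\<^bsub>G\<^esub> g) ` S"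

lemma no_p_dvd_index:
  fixes p n r s :: nat
  assumes "Factorial_Ring.prime p" "r * s = n" "s = p ^ multiplicity p n" "n > 0"
  shows "\<not> p dvd r"
proof
  assume "p dvd r"
  then have "p ^ Suc (multiplicity p n) dvd n" using assms
    by (metis mult_dvd_mono power_Suc dvd_refl mult.commute)
  then show False using assms
    by (metis Suc_n_not_le_n nat_less_le not_prime_unit power_dvd_iff_le_multiplicity)
qed

lemma (in group) p_subgroup_in_conj:
  assumes fin: "finite (carrier G)" and p: "Factorial_Ring.prime p"
    and P: "subgroup P G" "card P = p ^ multiplicity p (order G)"
    and H: "subgroup H G" "card H = p ^ k"
  shows "\<exists>g\<in>carrier G. H \<subseteq> conjset G g P"
proof -
  let ?E = "{S. S \<subseteq> carrier G}"
  let ?HG = "G\<lparr>carrier := H\<rparr>"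
  interpret A: group_action G ?E "rmul_act G" by (rule rmul_act_action)
  interpret B: group_action ?HG ?E "rmul_act G" by (rule A.induced_action[OF H(1)])
  let ?R = "rcosets P"
  have cardR: "card ?R * card P = order G" by (rule lagrange[OF P(1)])
  have ndvd: "\<not> p dvd card ?R"
    by (rule no_p_dvd_index[OF p cardR P(2)]) (use fin order_gt_0_iff_finite in blast)
  have RE: "?R \<subseteq> ?E"
    using rcosets_part_G[OF P(1)] by blast
  have HG: "H \<subseteq> carrier G" using H(1) subgroup.subset by blast
  have PG: "P \<subseteq> carrier G" using P(1) subgroup.subset by blast
  have act: "rmul_act G h S = S #> inv h" if "S \<in> ?R" for h S
    using that RE by (auto simp add: rmul_act_def)
  have "\<exists>S\<in>?R. \<forall>h\<in>H. rmul_act G h S = S"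
  proof (rule ccontr)
    assume nf: "\<not> ?thesis"
    let ?C = "(\<lambda>S. orbit ?HG (rmul_act G) S) ` ?R"
    have orbsub: "orbit ?HG (rmul_act G) S \<subseteq> ?R" if S: "S \<in> ?R" for S
    proof
      fix T assume "T \<in> orbit ?HG (rmul_act G) S"
      then obtain h where h: "h \<in> H" "T = rmul_act G h S" by (auto simp: orbit_def)
      obtain a where a: "a \<in> carrier G" "S = P #> a" using S unfolding RCOSETS_def by blast
      have hc: "h \<in> carrier G" using h HG by blast
      have "T = P #> a #> inv h" using h a S act by simp
      also have "... = P #> (a \<otimes> inv h)" using coset_mult_assoc[OF PG, of a "inv h"] hc a by simp
      finally have "T = P #> (a \<otimes> inv h)" .
      then show "T \<in> ?R" using rcosetsI[OF PG, of "a \<otimes> inv h"] a hc by simp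
    qed
    have U: "\<Union>?C = ?R"
    proof
      show "\<Union>?C \<subseteq> ?R" using orbsub by blast
      show "?R \<subseteq> \<Union>?C" using B.orbit_refl RE by blast
    qed
    have dv: "\<forall>c\<in>?C. p dvd card c"
    proof
      fix c assume "c \<in> ?C"
      then obtain S where S: "S \<in> ?R" "c = orbit ?HG (rmul_act G) S" by blast
      have "card c * card (stabilizer ?HG (rmul_act G) S) = order ?HG"
        using B.orbit_stabilizer_theorem S RE by blast
      moreover have "order ?HG = p ^ k" using H(2) by (simp add: order_def)
      ultimately have "card c dvd p ^ k" by (metis dvd_triv_left)
      then obtain j where j: "card c = p ^ j" using p by (auto simp: divides_primepow_nat)
      show "p dvd card c"
      proof (cases j)
        case 0
        then have "card c = 1" using j by simp
        moreover have "S \<in> c" using S B.orbit_refl RE by blast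
        ultimately have "c = {S}" by (metis card_1_singletonE singletonD)
        moreover have "rmul_act G h S \<in> c" if "h \<in> H" for h
          using S that unfolding orbit_def by auto
        ultimately show ?thesis using nf S by auto
      next
        case (Suc i) then show ?thesis using j by simp
      qed
    qed
    have disj: "\<forall>c1\<in>?C. \<forall>c2\<in>?C. c1 \<noteq> c2 \<longrightarrow> c1 \<inter> c2 = {}"
      using B.disjoint_union RE unfolding orbits_def by blast
    have "?E = Pow (carrier G)" by auto
    then have "finite ?R" using fin RE finite_subset[of ?R "Pow (carrier G)"] by simp
    then have "p dvd card (\<Union>?C)" using dvd_partition[of ?C p] dv disj U by simp
    then show False using ndvd U by simp
  qed
  then obtain S where S: "S \<in> ?R" "\<forall>h\<in>H. rmul_act G h S = S" by blast
  obtain a where a: "a \<in> carrier G" "S = P #> a" using S unfolding RCOSETS_def by blast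
  have "H \<subseteq> conjset G (inv a) P"
  proof
    fix h assume h: "h \<in> H"
    then have hc: "h \<in> carrier G" using HG by blast
    have "P #> a #> inv h = P #> a" using S h a act by simp
    then have "P #> (a \<otimes> inv h) = P #> a" using a hc P(1)
      by (simp add: coset_mult_assoc subgroup.subset)
    moreover have "a \<otimes> inv h \<in> P #> (a \<otimes> inv h)" using a hc P(1) by (simp add: rcos_self)
    ultimately have "a \<otimes> inv h \<in> P #> a" by simp
    then obtain b where b: "b \<in> P" "a \<otimes> inv h = b \<otimes> a" unfolding r_coset_def by blast
    have bc: "b \<in> carrier G" using b PG by blast
    have "h = inv a \<otimes> inv b \<otimes> inv (inv a)"
    proof -
      have "inv h = inv a \<otimes> (a \<otimes> inv h)" using a hc by (simp add: m_assoc [symmetric])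
      also have "... = inv a \<otimes> (b \<otimes> a)" using b(2) by simp
      finally have "inv h = inv a \<otimes> b \<otimes> a" using a bc by (simp add: m_assoc)
      then have "inv (inv h) = inv (inv a \<otimes> b \<otimes> a)" by simp
      then have "h = inv (inv a \<otimes> b \<otimes> a)" using hc by simp
      also have "... = inv a \<otimes> inv (inv a \<otimes> b)" using a bc inv_mult_group[of "inv a \<otimes> b" a] by simp
      also have "... = inv a \<otimes> (inv b \<otimes> a)" using a bc inv_mult_group[of "inv a" b] by simp
      finally show ?thesis using a bc by (simp add: m_assoc)
    qed
    moreover have "inv b \<in> P" using b(1) P(1) subgroup.m_inv_closed by fast
    ultimately show "h \<in> conjset G (inv a) P" unfolding conjset_def by (rule image_eqI)
  qed
  then show ?thesis using a by blast
qed

lemma (in group) inv_cancel_left [simp]: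
  "g \<in> carrier G \<Longrightarrow> a \<in> carrier G \<Longrightarrow> inv g \<otimes> (g \<otimes> a) = a"
  by (simp add: m_assoc [symmetric])

lemma (in group) inv_cancel_left2 [simp]:
  "g \<in> carrier G \<Longrightarrow> a \<in> carrier G \<Longrightarrow> g \<otimes> (inv g \<otimes> a) = a"
  by (simp add: m_assoc [symmetric])

lemma (in group) subgroup_card_dvd:
  assumes "subgroup I G" "subgroup J G" "I \<subseteq> J"
  shows "card I dvd card J"
proof -
  have "subgroup I (G\<lparr>carrier := J\<rparr>)" using subgroup_incl assms by blast
  then have "card (rcosets\<^bsub>G\<lparr>carrier := J\<rparr>\<^esub> I) * card I = order (G\<lparr>carrier := J\<rparr>)"
    using group.lagrange[OF subgroup_imp_group[OF assms(2)]] by blast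
  then have "card (rcosets\<^bsub>G\<lparr>carrier := J\<rparr>\<^esub> I) * card I = card J" by (simp add: order_def)
  then show ?thesis by (metis dvd_triv_right)
qed

lemma (in group) conjset_mem:
  assumes g: "g \<in> carrier G" and P: "P \<subseteq> carrier G"
  shows "y \<in> conjset G g P \<longleftrightarrow> y \<in> carrier G \<and> inv g \<otimes> y \<otimes> g \<in> P"
proof
  assume "y \<in> conjset G g P"
  then obtain a where a: "a \<in> P" "y = g \<otimes> a \<otimes> inv g" unfolding conjset_def by blast
  have ac: "a \<in> carrier G" using a P by blast
  have "inv g \<otimes> y \<otimes> g = a" using a(2) g ac by (simp add: m_assoc)
  then show "y \<in> carrier G \<and> inv g \<otimes> y \<otimes> g \<in> P" using a g ac by simp
next
  assume y: "y \<in> carrier G \<and> inv g \<otimes> y \<otimes> g \<in> P"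
  have "g \<otimes> (inv g \<otimes> y \<otimes> g) \<otimes> inv g = y" using y g by (simp add: m_assoc)
  then have "y = g \<otimes> (inv g \<otimes> y \<otimes> g) \<otimes> inv g" by simp
  then show "y \<in> conjset G g P" using image_eqI y unfolding conjset_def by blast
qed

lemma (in group) conjset_subgroup:
  assumes g: "g \<in> carrier G" and P: "subgroup P G"
  shows "subgroup (conjset G g P) G"
proof -
  have PG: "P \<subseteq> carrier G" using P subgroup.subset by blast
  note mem = conjset_mem[OF g PG]
  show ?thesis
  proof (rule subgroupI)
    show "conjset G g P \<subseteq> carrier G" using mem by blast
    have "g \<otimes> \<one> \<otimes> inv g \<in> conjset G g P" unfolding conjset_def using subgroup.one_closed[OF P] by blast
    then show "conjset G g P \<noteq> {}" by blast
  next
    fix a assume "a \<in> conjset G g P"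
    then have a: "a \<in> carrier G" "inv g \<otimes> a \<otimes> g \<in> P" using mem by auto
    have "inv (inv g \<otimes> a \<otimes> g) \<in> P" by (rule subgroup.m_inv_closed[OF P a(2)])
    moreover have "inv (inv g \<otimes> a \<otimes> g) = inv g \<otimes> inv a \<otimes> g"
    proof -
      have "inv (inv g \<otimes> a \<otimes> g) = inv g \<otimes> inv (inv g \<otimes> a)"
        using a g inv_mult_group[of "inv g \<otimes> a" g] by simp
      also have "... = inv g \<otimes> (inv a \<otimes> g)"
        using a g inv_mult_group[of "inv g" a] by simp
      finally show ?thesis using a g by (simp add: m_assoc)
    qed
    ultimately have "inv g \<otimes> inv a \<otimes> g \<in> P" by simp
    then show "inv a \<in> conjset G g P" using mem a(1) by simp
  next
    fix a b assume "a \<in> conjset G g P" "b \<in> conjset G g P"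
    then have a: "a \<in> carrier G" "inv g \<otimes> a \<otimes> g \<in> P" and b: "b \<in> carrier G" "inv g \<otimes> b \<otimes> g \<in> P" using mem by auto
    have "(inv g \<otimes> a \<otimes> g) \<otimes> (inv g \<otimes> b \<otimes> g) \<in> P" by (rule subgroup.m_closed[OF P a(2) b(2)])
    moreover have "(inv g \<otimes> a \<otimes> g) \<otimes> (inv g \<otimes> b \<otimes> g) = inv g \<otimes> (a \<otimes> b) \<otimes> g"
      using a b g by (simp add: m_assoc)
    ultimately have "inv g \<otimes> (a \<otimes> b) \<otimes> g \<in> P" by simp
    then show "a \<otimes> b \<in> conjset G g P" using mem a(1) b(1) by simp
  qed
qed

lemma (in group) conjset_card:
  assumes g: "g \<in> carrier G" and P: "P \<subseteq> carrier G"
  shows "card (conjset G g P) = card P"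
proof -
  have "inj_on (\<lambda>a. g \<otimes> a \<otimes> inv g) P"
  proof
    fix a b assume ab: "a \<in> P" "b \<in> P" "g \<otimes> a \<otimes> inv g = g \<otimes> b \<otimes> inv g"
    have ac: "a \<in> carrier G" and bc: "b \<in> carrier G" using ab P by auto
    have "a = inv g \<otimes> (g \<otimes> a \<otimes> inv g) \<otimes> g" using g ac by (simp add: m_assoc)
    also have "... = inv g \<otimes> (g \<otimes> b \<otimes> inv g) \<otimes> g" using ab(3) by simp
    also have "... = b" using g bc by (simp add: m_assoc)
    finally show "a = b" .
  qed
  then show ?thesis unfolding conjset_def by (rule card_image)
qed

lemma (in group) conj_eq_one:
  assumes "g \<in> carrier G" "z \<in> carrier G"
  shows "g \<otimes> z \<otimes> inv g = \<one> \<longleftrightarrow> z = \<one>"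
proof
  assume h: "g \<otimes> z \<otimes> inv g = \<one>"
  have "z = inv g \<otimes> (g \<otimes> z \<otimes> inv g) \<otimes> g" using assms by (simp add: m_assoc)
  also have "... = \<one>" using h assms by simp
  finally show "z = \<one>" .
qed (use assms in simp)

lemma (in group) conj_pow:
  assumes g: "g \<in> carrier G" and x: "x \<in> carrier G"
  shows "(g \<otimes> x \<otimes> inv g) [^] (n::nat) = g \<otimes> x [^] n \<otimes> inv g"
proof (induction n)
  case 0 then show ?case using assms by simp
next
  case (Suc n)
  have xn: "x [^] n \<in> carrier G" using x by simp
  have "(g \<otimes> x \<otimes> inv g) [^] Suc n = (g \<otimes> x \<otimes> inv g) [^] n \<otimes> (g \<otimes> x \<otimes> inv g)"
    by (rule nat_pow_Suc)
  also have "... = (g \<otimes> x [^] n \<otimes> inv g) \<otimes> (g \<otimes> x \<otimes> inv g)"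
    using Suc by simp
  also have "... = g \<otimes> (x [^] n \<otimes> x) \<otimes> inv g"
    using g x xn by (simp add: m_assoc)
  also have "... = g \<otimes> x [^] Suc n \<otimes> inv g"
    using nat_pow_Suc[of x n] by simp
  finally show ?case .
qed

lemma (in group) ord_conj:
  assumes g: "g \<in> carrier G" and x: "x \<in> carrier G"
  shows "ord (g \<otimes> x \<otimes> inv g) = ord x"
proof -
  have y: "g \<otimes> x \<otimes> inv g \<in> carrier G" using g x by simp
  have eq: "(g \<otimes> x \<otimes> inv g) [^] n = \<one> \<longleftrightarrow> x [^] n = \<one>" for n :: nat
    using conj_pow[OF g x, of n] conj_eq_one[OF g, of "x [^] n"] x by simp
  have "ord (g \<otimes> x \<otimes> inv g) dvd ord x"
    using eq[of "ord x"] pow_eq_id[OF y, of "ord x"] x by simp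
  moreover have "ord x dvd ord (g \<otimes> x \<otimes> inv g)"
    using eq[of "ord (g \<otimes> x \<otimes> inv g)"] pow_eq_id[OF x, of "ord (g \<otimes> x \<otimes> inv g)"] y by simp
  ultimately show ?thesis by (rule dvd_antisym)
qed

lemma (in group) sylow_conj:
  assumes fin: "finite (carrier G)" and p: "Factorial_Ring.prime p"
    and P: "subgroup P G" "card P = p ^ multiplicity p (order G)"
    and Q: "subgroup Q G" "card Q = p ^ multiplicity p (order G)"
  shows "\<exists>g\<in>carrier G. Q = conjset G g P"
proof -
  obtain g where g: "g \<in> carrier G" "Q \<subseteq> conjset G g P"
    using p_subgroup_in_conj[OF fin p P Q] by blast
  have PG: "P \<subseteq> carrier G" using P(1) subgroup.subset by blast
  have "conjset G g P \<subseteq> carrier G" using conjset_mem[OF g(1) PG] by blast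
  then have "finite (conjset G g P)" using fin finite_subset by blast
  moreover have "card Q = card (conjset G g P)" using conjset_card[OF g(1) PG] P(2) Q(2) by simp
  ultimately have "Q = conjset G g P" using g(2) card_subset_eq by blast
  then show ?thesis using g(1) by blast
qed

lemma (in group) p_elem_conj:
  assumes fin: "finite (carrier G)" and p: "Factorial_Ring.prime p"
    and P: "subgroup P G" "card P = p ^ multiplicity p (order G)"
    and x: "x \<in> carrier G" "ord x = p ^ e"
  shows "\<exists>g\<in>carrier G. x \<in> conjset G g P"
proof -
  have H: "subgroup (generate G {x}) G" using x generate_is_subgroup by blast
  have "card (generate G {x}) = p ^ e" using generate_pow_card[OF x(1)] x(2) by simp
  then obtain g where "g \<in> carrier G" "generate G {x} \<subseteq> conjset G g P"
    using p_subgroup_in_conj[OF fin p P H] by blast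
  moreover have "x \<in> generate G {x}" by (rule generate.incl) simp
  ultimately show ?thesis by blast
qed


locale redsyl = group G for G (structure) +
  fixes p P N
  assumes fin: "finite (carrier G)" and pp: "Factorial_Ring.prime p"
    and Psyl: "P \<in> Sylow_subgroups G p" and Pnt: "P \<noteq> {\<one>}"
    and Nn: "N \<lhd> G"
    and PN: "P <#> N = carrier G"
    and cop: "coprime (card P) (card N)"
    and cent: "centralizer_in G N P = {\<one>}"
begin

lemma P_sub: "subgroup P G" and P_card: "card P = p ^ multiplicity p (order G)"
  using Psyl by (auto simp: Sylow_subgroups_def)

lemma PG: "P \<subseteq> carrier G" using P_sub subgroup.subset by blast

lemma N_sub: "subgroup N G" using Nn normal_imp_subgroup by blast

lemma NG: "N \<subseteq> carrier G" using N_sub subgroup.subset by blast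

lemma PN_int: "P \<inter> N = {\<one>}"
proof -
  have S: "subgroup (P \<inter> N) G" using P_sub N_sub subgroups_Inter_pair by blast
  have "card (P \<inter> N) dvd card P" using subgroup_card_dvd[OF S P_sub] by blast
  moreover have "card (P \<inter> N) dvd card N" using subgroup_card_dvd[OF S N_sub] by blast
  ultimately have "card (P \<inter> N) = 1" using cop coprime_common_divisor[of "card P" "card N" "card (P \<inter> N)"] by simp
  moreover have "\<one> \<in> P \<inter> N" using S subgroup.one_closed by blast
  moreover obtain u where "P \<inter> N = {u}" using card_1_singletonE calculation(1) by blast
  ultimately show ?thesis by simp
qed

lemma decomp:
  assumes g: "g \<in> carrier G"
  shows "\<exists>n\<in>N. \<exists>a\<in>P. g = n \<otimes> a"
proof -
  obtain a m where am: "a \<in> P" "m \<in> N" "g = a \<otimes> m"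
    using g PN unfolding set_mult_def by blast
  have ac: "a \<in> carrier G" and mc: "m \<in> carrier G" using am PG NG by auto
  have "a \<otimes> m \<otimes> inv a \<in> N" using normal.inv_op_closed2[OF Nn ac am(2)] .
  moreover have "g = (a \<otimes> m \<otimes> inv a) \<otimes> a" using am(3) ac mc by (simp add: m_assoc)
  ultimately show ?thesis using am(1) by blast
qed

lemma conj_in_P:
  assumes a: "a \<in> P" and w: "w \<in> carrier G"
  shows "inv a \<otimes> w \<otimes> a \<in> P \<longleftrightarrow> w \<in> P"
proof
  have ac: "a \<in> carrier G" using a PG by blast
  assume h: "inv a \<otimes> w \<otimes> a \<in> P"
  have "a \<otimes> (inv a \<otimes> w \<otimes> a) \<otimes> inv a \<in> P"
    by (intro subgroup.m_closed[OF P_sub] subgroup.m_inv_closed[OF P_sub] a h)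
  moreover have "a \<otimes> (inv a \<otimes> w \<otimes> a) \<otimes> inv a = w" using ac w by (simp add: m_assoc)
  ultimately show "w \<in> P" by simp
next
  assume "w \<in> P"
  then show "inv a \<otimes> w \<otimes> a \<in> P"
    by (intro subgroup.m_closed[OF P_sub] subgroup.m_inv_closed[OF P_sub] a)
qed

lemma conjN:
  assumes g: "g \<in> carrier G"
  shows "\<exists>n\<in>N. conjset G g P = conjset G n P"
proof -
  obtain n a where na: "n \<in> N" "a \<in> P" "g = n \<otimes> a" using decomp[OF g] by blast
  have nc: "n \<in> carrier G" and ac: "a \<in> carrier G" using na PG NG by auto
  have "conjset G g P = conjset G n P"
  proof (rule Set.set_eqI)
    fix y
    show "y \<in> conjset G g P \<longleftrightarrow> y \<in> conjset G n P"
    proof (cases "y \<in> carrier G")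
      case True
      have "inv g \<otimes> y \<otimes> g = inv a \<otimes> (inv n \<otimes> y \<otimes> n) \<otimes> a"
        using na(3) nc ac True by (simp add: inv_mult_group m_assoc)
      then have "inv g \<otimes> y \<otimes> g \<in> P \<longleftrightarrow> inv n \<otimes> y \<otimes> n \<in> P"
        using conj_in_P[OF na(2), of "inv n \<otimes> y \<otimes> n"] nc True by simp
      then show ?thesis using conjset_mem[OF g PG] conjset_mem[OF nc PG] by simp
    next
      case False
      then show ?thesis using conjset_mem[OF g PG] conjset_mem[OF nc PG] by simp
    qed
  qed
  then show ?thesis using na(1) by blast
qed

lemma commD:
  assumes z: "z \<in> P" and m: "m \<in> N" and h: "inv m \<otimes> z \<otimes> m \<in> P"
  shows "z \<otimes> m = m \<otimes> z"
proof -
  have zc: "z \<in> carrier G" and mc: "m \<in> carrier G" using z m PG NG by auto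
  let ?w = "inv z \<otimes> (inv m \<otimes> z \<otimes> m)"
  have "?w \<in> P" by (intro subgroup.m_closed[OF P_sub] subgroup.m_inv_closed[OF P_sub] z h)
  moreover have "?w \<in> N"
  proof -
    have "inv m \<in> N" by (rule subgroup.m_inv_closed[OF N_sub m])
    then have "inv z \<otimes> inv m \<otimes> inv (inv z) \<in> N"
      using normal.inv_op_closed2[OF Nn, of "inv z" "inv m"] zc by simp
    then have "inv z \<otimes> inv m \<otimes> z \<in> N" using zc by simp
    then have "(inv z \<otimes> inv m \<otimes> z) \<otimes> m \<in> N" by (rule subgroup.m_closed[OF N_sub _ m])
    moreover have "(inv z \<otimes> inv m \<otimes> z) \<otimes> m = ?w" using zc mc by (simp add: m_assoc)
    ultimately show ?thesis by simp
  qed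
  ultimately have "?w = \<one>" using PN_int by blast
  then have "z \<otimes> ?w = z" using zc by simp
  then have "inv m \<otimes> z \<otimes> m = z" using zc mc by (simp add: m_assoc [symmetric])
  then have "m \<otimes> (inv m \<otimes> z \<otimes> m) = m \<otimes> z" by simp
  then show ?thesis using zc mc by (simp add: m_assoc)
qed

lemma transfer:
  assumes x: "x \<in> carrier G" and c: "c \<in> carrier G" and m: "m \<in> N" "m \<noteq> \<one>"
    and h: "(c \<otimes> x \<otimes> inv c) \<otimes> m = m \<otimes> (c \<otimes> x \<otimes> inv c)"
  shows "\<exists>m'\<in>N. m' \<noteq> \<one> \<and> x \<otimes> m' = m' \<otimes> x"
proof -
  have mc: "m \<in> carrier G" using m NG by blast
  let ?m = "inv c \<otimes> m \<otimes> inv (inv c)"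
  have "?m \<in> N" using normal.inv_op_closed2[OF Nn, of "inv c" m] c m by simp
  moreover have "?m \<noteq> \<one>" using conj_eq_one[of "inv c" m] c mc m(2) by simp
  moreover have "x \<otimes> ?m = ?m \<otimes> x"
  proof -
    have "x \<otimes> ?m = inv c \<otimes> ((c \<otimes> x \<otimes> inv c) \<otimes> m) \<otimes> c" using x c mc by (simp add: m_assoc)
    also have "... = inv c \<otimes> (m \<otimes> (c \<otimes> x \<otimes> inv c)) \<otimes> c" using h by simp
    also have "... = ?m \<otimes> x" using x c mc by (simp add: m_assoc)
    finally show ?thesis .
  qed
  ultimately show ?thesis by blast
qed

lemma cent_iff:
  assumes x: "x \<in> carrier G"
  shows "centralizer_in G N {x} \<noteq> {\<one>} \<longleftrightarrow> (\<exists>m\<in>N. m \<noteq> \<one> \<and> x \<otimes> m = m \<otimes> x)"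
proof -
  have "\<one> \<in> centralizer_in G N {x}" using x N_sub subgroup.one_closed unfolding centralizer_in_def by fastforce
  then show ?thesis unfolding centralizer_in_def by blast
qed

lemma conj_syl:
  assumes g: "g \<in> carrier G"
  shows "conjset G g P \<in> Sylow_subgroups G p"
  using conjset_subgroup[OF g P_sub] conjset_card[OF g PG] P_card
  unfolding Sylow_subgroups_def by simp

lemma pel_ord: "x \<in> p_elements G p \<longleftrightarrow> x \<in> carrier G \<and> (\<exists>e::nat. ord x = p ^ e)"
  unfolding p_elements_def by simp

lemma dir1:
  assumes H: "\<forall>x\<in>p_elements G p. centralizer_in G N {x} \<noteq> {\<one>}"
  shows "has_redundant_Sylow G p"
proof -
  let ?S = "Sylow_subgroups G p - {P}"
  have "?S \<subset> Sylow_subgroups G p" using Psyl by blast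
  moreover have "p_elements G p \<subseteq> \<Union> ?S"
  proof
    fix x assume xp: "x \<in> p_elements G p"
    then obtain e where x: "x \<in> carrier G" "ord x = p ^ e" using pel_ord by blast
    obtain k where k: "k \<in> carrier G" "x \<in> conjset G k P"
      using p_elem_conj[OF fin pp P_sub P_card x] by blast
    show "x \<in> \<Union> ?S"
    proof (cases "conjset G k P = P")
      case False
      then show ?thesis using k conj_syl[OF k(1)] by blast
    next
      case True
      then have xP: "x \<in> P" using k by simp
      obtain m where m: "m \<in> N" "m \<noteq> \<one>" "x \<otimes> m = m \<otimes> x"
        using H xp cent_iff[OF x(1)] by blast
      have mc: "m \<in> carrier G" using m NG by blast
      have "inv m \<otimes> x \<otimes> m = inv m \<otimes> (x \<otimes> m)" using mc x by (simp add: m_assoc)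
      also have "... = x" using m(3) mc x by (simp add: m_assoc [symmetric])
      finally have "inv m \<otimes> x \<otimes> m \<in> P" using xP by simp
      then have xQ: "x \<in> conjset G m P" using conjset_mem[OF mc PG] x by simp
      have "conjset G m P \<noteq> P"
      proof
        assume eq: "conjset G m P = P"
        have "\<forall>z\<in>P. z \<otimes> m = m \<otimes> z"
        proof
          fix z assume z: "z \<in> P"
          then have "z \<in> conjset G m P" using eq by simp
          then have "inv m \<otimes> z \<otimes> m \<in> P" using conjset_mem[OF mc PG] by simp
          then show "z \<otimes> m = m \<otimes> z" using commD[OF z m(1)] by simp
        qed
        then have "m \<in> centralizer_in G N P" unfolding centralizer_in_def using m(1) by simp
        then show False using cent m(2) by simp
      qed
      then show ?thesis using xQ conj_syl[OF mc] by blast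
    qed
  qed
  ultimately show ?thesis unfolding has_redundant_Sylow_def by blast
qed

lemma dir2:
  assumes R: "has_redundant_Sylow G p"
  shows "\<forall>x\<in>p_elements G p. centralizer_in G N {x} \<noteq> {\<one>}"
proof
  fix x assume xp: "x \<in> p_elements G p"
  then obtain e where x: "x \<in> carrier G" "ord x = p ^ e" using pel_ord by blast
  obtain S where S: "S \<subset> Sylow_subgroups G p" "p_elements G p \<subseteq> \<Union> S"
    using R unfolding has_redundant_Sylow_def by blast
  obtain Q where Q: "Q \<in> Sylow_subgroups G p" "Q \<notin> S" using S(1) by blast
  have Qs: "subgroup Q G" "card Q = p ^ multiplicity p (order G)"
    using Q(1) unfolding Sylow_subgroups_def by auto
  obtain g where g: "g \<in> carrier G" "Q = conjset G g P" using sylow_conj[OF fin pp P_sub P_card Qs] by blast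
  obtain n where n: "n \<in> N" "Q = conjset G n P" using conjN[OF g(1)] g(2) by auto
  have nc: "n \<in> carrier G" using n NG by blast
  obtain k where k: "k \<in> carrier G" "x \<in> conjset G k P"
    using p_elem_conj[OF fin pp P_sub P_card x] by blast
  define a where "a = inv k \<otimes> x \<otimes> k"
  have aP: "a \<in> P" using k conjset_mem[OF k(1) PG] unfolding a_def by simp
  have ac: "a \<in> carrier G" using aP PG by blast
  have a_conj: "a = inv k \<otimes> x \<otimes> inv (inv k)" using k(1) unfolding a_def by simp
  have ord_a: "ord a = p ^ e" using ord_conj[of "inv k" x] k(1) x a_conj by simp
  define y where "y = n \<otimes> a \<otimes> inv n"
  have yc: "y \<in> carrier G" unfolding y_def using nc ac by simp
  have "ord y = p ^ e" using ord_conj[OF nc ac] ord_a unfolding y_def by simp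
  then have yp: "y \<in> p_elements G p" using yc pel_ord by blast
  have yQ: "y \<in> Q" unfolding n(2) conjset_def y_def using aP by blast
  have ny: "inv n \<otimes> y \<otimes> n = a" unfolding y_def using nc ac by (simp add: m_assoc)
  obtain R where R: "R \<in> S" "y \<in> R" using yp S(2) by blast
  have RQ: "R \<noteq> Q" using R(1) Q(2) by blast
  have Rsyl: "R \<in> Sylow_subgroups G p" using R(1) S(1) by blast
  have Rs: "subgroup R G" "card R = p ^ multiplicity p (order G)"
    using Rsyl unfolding Sylow_subgroups_def by auto
  obtain h where h: "h \<in> carrier G" "R = conjset G h P" using sylow_conj[OF fin pp P_sub P_card Rs] by blast
  obtain n' where n': "n' \<in> N" "R = conjset G n' P" using conjN[OF h(1)] h(2) by auto
  have n'c: "n' \<in> carrier G" using n' NG by blast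
  define m where "m = inv n \<otimes> n'"
  have mN: "m \<in> N" unfolding m_def
    by (intro subgroup.m_closed[OF N_sub] subgroup.m_inv_closed[OF N_sub] n(1) n'(1))
  have mc: "m \<in> carrier G" using mN NG by blast
  have "inv m \<otimes> a \<otimes> m = inv n' \<otimes> y \<otimes> n'"
    unfolding m_def y_def using nc n'c ac by (simp add: inv_mult_group m_assoc)
  also have "... \<in> P" using R(2) n'(2) conjset_mem[OF n'c PG] by simp
  finally have "a \<otimes> m = m \<otimes> a" using commD[OF aP mN] by simp
  moreover have "m \<noteq> \<one>"
  proof
    assume "m = \<one>"
    then have "n \<otimes> m = n" using nc by simp
    moreover have "n \<otimes> m = n'" unfolding m_def using nc n'c by (simp add: m_assoc [symmetric])
    ultimately have "n' = n" by simp
    then show False using RQ n(2) n'(2) by simp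
  qed
  ultimately obtain m' where "m' \<in> N" "m' \<noteq> \<one>" "x \<otimes> m' = m' \<otimes> x"
    using transfer[OF x(1) _ mN] k(1) a_conj by (metis inv_closed)
  then show "centralizer_in G N {x} \<noteq> {\<one>}" using cent_iff[OF x(1)] by blast
qed

lemma main: "has_redundant_Sylow G p \<longleftrightarrow> (\<forall>x\<in>p_elements G p. centralizer_in G N {x} \<noteq> {\<one>})"
  using dir1 dir2 by blast

end

theorem corollary3p2:
  fixes G :: "('a, 'b) monoid_scheme" and p :: nat and P N :: "'a set"
  assumes "group G" and "finite (carrier G)" and "Factorial_Ring.prime p"
    and "P \<in> Sylow_subgroups G p" and "P \<noteq> {\<one>\<^bsub>G\<^esub>}"
    and "N \<lhd> G"
    and "P <#>\<^bsub>G\<^esub> N = carrier G"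
    and "coprime (card P) (card N)"
    and "centralizer_in G N P = {\<one>\<^bsub>G\<^esub>}"
  shows "has_redundant_Sylow G p \<longleftrightarrow>
           (\<forall>x \<in> p_elements G p. centralizer_in G N {x} \<noteq> {\<one>\<^bsub>G\<^esub>})"
proof -
  interpret redsyl G p P N
    by (intro redsyl.intro redsyl_axioms.intro) (rule assms)+
  show ?thesis by (rule main)
qed

end
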